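(* Let $K\ge2$, $a,b\ge1$ be integers. For any scheme with uncoded cache placement for the $(K,a,b)$ coded caching problem for location-based content, with load $R$, one has $$R\ \ge\ \frac{K-1}{aK}\,\alpha_0+\frac{1}{bK}\,\beta_0+\frac{K-1}{2aK}\,\alpha_1 .$$
   Context: For integers $x\le y$, $[x:y]=\{x,x+1,\dots,y\}$ and $[n]=[1:n]$. For integers $c$ and $m\ge1$, $\langle c\rangle_m$ denotes the unique element of $\{1,\dots,m\}$ congruent to $c$ modulo $m$. The $(K,a,b)$ coded caching problem for location-based content: a server has $N=K(a+b)$ files $W_1,\dots,W_N$, each consisting of $B$ independent uniformly distributed bits. There are $K$ cache nodes, each storing $MB$ bits, and $K$ users, user $k$ having free access to cache node $k$ only. For $k\in[K]$ define $\mathcal D_{k,1}=[(k-1)(a+b)+1:ka+(k-1)b]$, $\mathcal D_{k,2}=[ka+(k-1)b+1:k(a+b)]$, $\mathcal D_{k,3}=\mathcal D_{\langle k+1\rangle_K,1}$, and $\mathcal D_k=\mathcal D_{k,1}\cup\mathcal D_{k,2}\cup\mathcal D_{k,3}$. A scheme consists of placement $Z_k=\phi_k(W_1,\dots,W_N)\in\{0,1\}^{MB}$ (fixed before demands), for each demand vector $\mathbf d\in\mathcal D_1\times\cdots\times\mathcal D_K$ a broadcast message $X=\psi(\mathbf d,W_1,\dots,W_N)\in\{0,1\}^{RB}$, and decoders such that user $k$ recovers $W_{d_k}$ exactly from $(\mathbf d,Z_k,X)$. The placement is uncoded if each $Z_k$ is a subset of the file bits copied directly. For uncoded placement, for $i\in[N]$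 and $\mathcal T\subseteq[K]$, $W_{i,\mathcal T}$ denotes the set of bits of $W_i$ stored in exactly the cache nodes in $\mathcal T$ (and in no other cache node), and $|W_{i,\mathcal T}|$ its number of bits. Let $\mathcal C_1=\bigcup_{k\in[K]}\mathcal D_{k,1}$, $\mathcal C_2=\bigcup_{k\in[K]}\mathcal D_{k,2}$, and define $\alpha_0=\sum_{i\in\mathcal C_1}|W_{i,\emptyset}|/B$, $\beta_0=\sum_{i\in\mathcal C_2}|W_{i,\emptyset}|/B$, $\alpha_1=\sum_{i\in\mathcal C_1}\sum_{j\in[K]}|W_{i,\{j\}}|/B$. *)

theory Defs
  imports Complex_Main
begin

(* <c>_m for c \<ge> 1 : the unique element of {1..m} congruent to c mod m *)
definition cyc :: "nat \<Rightarrow> nat \<Rightarrow> nat" where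
  "cyc c m = (c - 1) mod m + 1"

definition Dset1 :: "nat \<Rightarrow> nat \<Rightarrow> nat \<Rightarrow> nat set" where
  "Dset1 a b k = {(k - 1) * (a + b) + 1 .. k * a + (k - 1) * b}"

definition Dset2 :: "nat \<Rightarrow> nat \<Rightarrow> nat \<Rightarrow> nat set" where
  "Dset2 a b k = {k * a + (k - 1) * b + 1 .. k * (a + b)}"

definition Dset3 :: "nat \<Rightarrow> nat \<Rightarrow> nat \<Rightarrow> nat \<Rightarrow> nat set" where
  "Dset3 K a b k = Dset1 a b (cyc (k + 1) K)"

definition Dset :: "nat \<Rightarrow> nat \<Rightarrow> nat \<Rightarrow> nat \<Rightarrow> nat set" where
  "Dset K a b k = Dset1 a b k \<union> Dset2 a b k \<union> Dset3 K a b k"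

definition C1 :: "nat \<Rightarrow> nat \<Rightarrow> nat \<Rightarrow> nat set" where
  "C1 K a b = (\<Union>k\<in>{1..K}. Dset1 a b k)"

definition C2 :: "nat \<Rightarrow> nat \<Rightarrow> nat \<Rightarrow> nat set" where
  "C2 K a b = (\<Union>k\<in>{1..K}. Dset2 a b k)"

(* A file library: W i j is bit j (j < B) of file i (1 \<le> i \<le> N); all other entries are False. *)
definition valid_lib :: "nat \<Rightarrow> nat \<Rightarrow> (nat \<Rightarrow> nat \<Rightarrow> bool) \<Rightarrow> bool" where
  "valid_lib N B W \<longleftrightarrow> (\<forall>i j. (i \<notin> {1..N} \<or> B \<le> j) \<longrightarrow> W i j = False)"

definition valid_demand :: "nat \<Rightarrow> nat \<Rightarrow> nat \<Rightarrow> (nat \<Rightarrow> nat) \<Rightarrow> bool" where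
  "valid_demand K a b d \<longleftrightarrow> (\<forall>k\<in>{1..K}. d k \<in> Dset K a b k)"

definition cache :: "(nat \<Rightarrow> (nat \<times> nat) set) \<Rightarrow> nat \<Rightarrow> (nat \<Rightarrow> nat \<Rightarrow> bool)
                      \<Rightarrow> (nat \<times> nat) \<Rightarrow> bool" where
  "cache S k W = (\<lambda>p. if p \<in> S k then W (fst p) (snd p) else False)"

(* A scheme with uncoded placement S for the (K,a,b) problem, B bits per file,
   cache size M (M*B bits), broadcast messages of L bits (load R = L/B),
   encoder psi and decoders dec. *)
definition uncoded_scheme ::
  "nat \<Rightarrow> nat \<Rightarrow> nat \<Rightarrow> nat \<Rightarrow> real \<Rightarrow> nat \<Rightarrow> (nat \<Rightarrow> (nat \<times> nat) set)
   \<Rightarrow> ((nat \<Rightarrow> nat) \<Rightarrow> (nat \<Rightarrow> nat \<Rightarrow> bool) \<Rightarrow> bool list)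
   \<Rightarrow> (nat \<Rightarrow> (nat \<Rightarrow> nat) \<Rightarrow> ((nat \<times> nat) \<Rightarrow> bool) \<Rightarrow> bool list \<Rightarrow> nat \<Rightarrow> bool) \<Rightarrow> bool" where
  "uncoded_scheme K a b B M L S psi dec \<longleftrightarrow>
     (\<forall>k\<in>{1..K}. S k \<subseteq> {1..K * (a + b)} \<times> {..<B} \<and> real (card (S k)) \<le> M * real B) \<and>
     (\<forall>d W. valid_demand K a b d \<and> valid_lib (K * (a + b)) B W \<longrightarrow>
        length (psi d W) = L \<and>
        (\<forall>k\<in>{1..K}. \<forall>j<B. dec k d (cache S k W) (psi d W) j = W (d k) j))"

definition Wsub :: "nat \<Rightarrow> nat \<Rightarrow> (nat \<Rightarrow> (nat \<times> nat) set) \<Rightarrow> nat \<Rightarrow> nat set \<Rightarrow> nat set" where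
  "Wsub K B S i T = {j. j < B \<and> (\<forall>k\<in>{1..K}. ((i, j) \<in> S k) = (k \<in> T))}"

definition alpha0 :: "nat \<Rightarrow> nat \<Rightarrow> nat \<Rightarrow> nat \<Rightarrow> (nat \<Rightarrow> (nat \<times> nat) set) \<Rightarrow> real" where
  "alpha0 K a b B S = (\<Sum>i\<in>C1 K a b. real (card (Wsub K B S i {}))) / real B"

definition beta0 :: "nat \<Rightarrow> nat \<Rightarrow> nat \<Rightarrow> nat \<Rightarrow> (nat \<Rightarrow> (nat \<times> nat) set) \<Rightarrow> real" where
  "beta0 K a b B S = (\<Sum>i\<in>C2 K a b. real (card (Wsub K B S i {}))) / real B"

definition alpha1 :: "nat \<Rightarrow> nat \<Rightarrow> nat \<Rightarrow> nat \<Rightarrow> (nat \<Rightarrow> (nat \<times> nat) set) \<Rightarrow> real" where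
  "alpha1 K a b B S =
     (\<Sum>i\<in>C1 K a b. \<Sum>j\<in>{1..K}. real (card (Wsub K B S i {j}))) / real B"

end

theory Submission
  imports Defs
begin

lemma modinj: fixes K x i i' :: nat
  assumes "i < K" "i' < K" "(x + i) mod K = (x + i') mod K" shows "i = i'"
proof -
  have "\<And>i i'. i \<le> i' \<Longrightarrow> i' < K \<Longrightarrow> (x + i) mod K = (x + i') mod K \<Longrightarrow> i = i'"
  proof -
    fix i i' :: nat assume h: "i \<le> i'" "i' < K" "(x + i) mod K = (x + i') mod K"
    have "K dvd (x + i') - (x + i)" using h mod_eq_dvd_iff_nat[of "x+i" "x+i'" K] by simp
    hence "K dvd i' - i" by simp
    moreover have "i' - i < K" using h by simp
    ultimately have "i' - i = 0" using dvd_imp_le by (metis gr0I leD)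
    thus "i = i'" using h by simp
  qed
  thus ?thesis using assms by (metis nat_le_linear)
qed

lemma blk_lt: fixes m m' x x' n :: nat
  assumes "m < m'" "x \<le> n" "1 \<le> x'"
  shows "m * n + x < m' * n + x'"
proof -
  have "m * n + x \<le> m * n + n" using assms by simp
  also have "\<dots> = Suc m * n" by simp
  also have "\<dots> \<le> m' * n" using assms(1) by (metis Suc_leI mult_le_mono1)
  finally show ?thesis using assms by simp
qed

lemma blk: fixes m m' x x' n :: nat
  assumes "m * n + x = m' * n + x'" "1 \<le> x" "x \<le> n" "1 \<le> x'" "x' \<le> n"
  shows "m = m' \<and> x = x'"
proof -
  have "\<not> m < m'" using blk_lt[of m m' x n x'] assms by auto
  moreover have "\<not> m' < m" using blk_lt[of m' m x' n x] assms by auto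
  ultimately have "m = m'" by simp
  thus ?thesis using assms by simp
qed

lemma cyc_range: "K \<ge> 1 \<Longrightarrow> cyc c K \<in> {1..K}"
  unfolding cyc_def by (simp add: Suc_leI)

lemma Dset1_range: assumes "k \<in> {1..K}" shows "Dset1 a b k \<subseteq> {1..K*(a+b)}"
proof
  fix x assume x: "x \<in> Dset1 a b k"
  have "k * a + (k - 1) * b \<le> K * a + K * b" using assms
    by (intro add_mono mult_le_mono1) auto
  moreover have "x \<le> k * a + (k - 1) * b" "1 \<le> x" using x unfolding Dset1_def by auto
  ultimately show "x \<in> {1..K*(a+b)}" by (simp add: distrib_left)
qed

lemma Dset2_range: assumes "k \<in> {1..K}" shows "Dset2 a b k \<subseteq> {1..K*(a+b)}"
proof
  fix x assume x: "x \<in> Dset2 a b k"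
  have "k * (a + b) \<le> K * (a + b)" using assms by (intro mult_le_mono1) auto
  moreover have "x \<le> k * (a + b)" "1 \<le> x" using x unfolding Dset2_def by auto
  ultimately show "x \<in> {1..K*(a+b)}" by (meson le_trans atLeastAtMost_iff)
qed

lemma Dset_range: assumes "k \<in> {1..K}" shows "Dset K a b k \<subseteq> {1..K*(a+b)}"
proof -
  have "K \<ge> 1" using assms by simp
  from Dset1_range[OF cyc_range[OF this, of "k+1"], of a b]
  show ?thesis using Dset1_range[OF assms] Dset2_range[OF assms]
    unfolding Dset_def Dset3_def by auto
qed

definition gcnt :: "nat \<Rightarrow> (nat \<Rightarrow> (nat \<times> nat) set) \<Rightarrow> nat \<Rightarrow> nat set \<Rightarrow> nat" where
  "gcnt B S f P = card {j. j < B \<and> (\<forall>k\<in>P. (f, j) \<notin> S k)}"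

lemma chain_bound:
  fixes d p :: "nat \<Rightarrow> nat" and n :: nat
  assumes sch: "uncoded_scheme K a b B M L S psi dec"
    and vd: "valid_demand K a b d"
    and pK: "\<And>i. i < n \<Longrightarrow> p i \<in> {1..K}"
    and inj: "inj_on (\<lambda>i. d (p i)) {..<n}"
  shows "(\<Sum>i<n. gcnt B S (d (p i)) (p ` {..i})) \<le> L"
proof -
  define G where "G i = {j. j < B \<and> (\<forall>k\<in>p ` {..i}. (d (p i), j) \<notin> S k)}" for i
  define T where "T = (\<Union>i\<in>{..<n}. (\<lambda>j. (d (p i), j)) ` G i)"
  have finG: "finite (G i)" for i unfolding G_def by auto
  have cardT: "card T = (\<Sum>i<n. gcnt B S (d (p i)) (p ` {..i}))"
    unfolding T_def
  proof (subst card_UN_disjoint)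
    show "finite {..<n}" by simp
    show "\<forall>i\<in>{..<n}. finite ((\<lambda>j. (d (p i), j)) ` G i)" using finG by auto
    show "\<forall>i\<in>{..<n}. \<forall>j\<in>{..<n}. i \<noteq> j \<longrightarrow> (\<lambda>j. (d (p i), j)) ` G i \<inter> (\<lambda>ja. (d (p j), ja)) ` G j = {}"
      using inj unfolding inj_on_def by auto
    show "(\<Sum>i<n. card ((\<lambda>j. (d (p i), j)) ` G i)) = (\<Sum>i<n. gcnt B S (d (p i)) (p ` {..i}))"
      by (rule sum.cong) (auto simp: card_image inj_on_def G_def gcnt_def)
  qed
  have finT: "finite T" unfolding T_def using finG by auto
  have dpr: "d (p i) \<in> {1..K*(a+b)}" if "i < n" for i
    using vd pK[OF that] subsetD[OF Dset_range[OF pK[OF that], of a b]] unfolding valid_demand_def by blast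
  have Tsub: "T \<subseteq> {1..K*(a+b)} \<times> {..<B}" unfolding T_def G_def using dpr by auto
  define Phi where "Phi A = (\<lambda>x y. (x, y) \<in> A)" for A :: "(nat \<times> nat) set"
  have valid: "valid_lib (K*(a+b)) B (Phi A)" if "A \<subseteq> T" for A
    using that Tsub unfolding valid_lib_def Phi_def by auto
  have decode: "dec k d (cache S k (Phi A)) (psi d (Phi A)) j = Phi A (d k) j"
    if "A \<subseteq> T" "k \<in> {1..K}" "j < B" for A k j
    using sch vd valid[OF that(1)] that unfolding uncoded_scheme_def by blast
  have lenL: "length (psi d (Phi A)) = L" if "A \<subseteq> T" for A
    using sch vd valid[OF that] unfolding uncoded_scheme_def by blast
  have injP: "inj_on (\<lambda>A. psi d (Phi A)) (Pow T)"
  proof (rule inj_onI)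
    fix A A' assume A: "A \<in> Pow T" and A': "A' \<in> Pow T" and eq: "psi d (Phi A) = psi d (Phi A')"
    have agree: "\<forall>j<B. Phi A (d (p i)) j = Phi A' (d (p i)) j" if "i < n" for i
      using that
    proof (induction i rule: less_induct)
      case (less i)
      have cacheeq: "cache S (p i) (Phi A) = cache S (p i) (Phi A')"
      proof
        fix q
        show "cache S (p i) (Phi A) q = cache S (p i) (Phi A') q"
        proof (cases "q \<in> S (p i)")
          case False thus ?thesis unfolding cache_def by simp
        next
          case qS: True
          show ?thesis
          proof (cases "q \<in> T")
            case False
            hence "q \<notin> A" "q \<notin> A'" using A A' by auto
            thus ?thesis unfolding cache_def Phi_def by simp
          next
            case True
            then obtain i' j where i': "i' < n" "q = (d (p i'), j)" "j < B"
              "\<forall>k\<in>p ` {..i'}. (d (p i'), j) \<notin> S k"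
              unfolding T_def G_def by auto
            have "\<not> i \<le> i'" using i' qS by auto
            hence "i' < i" by simp
            from less.IH[OF this i'(1)] i'(3)
            have "Phi A (d (p i')) j = Phi A' (d (p i')) j" by blast
            thus ?thesis using i'(2) unfolding cache_def by simp
          qed
        qed
      qed
      show ?case
      proof (intro allI impI)
        fix j assume j: "j < B"
        have "Phi A (d (p i)) j = dec (p i) d (cache S (p i) (Phi A)) (psi d (Phi A)) j"
          using decode[of A "p i" j] A pK[OF less.prems] j by simp
        also have "\<dots> = dec (p i) d (cache S (p i) (Phi A')) (psi d (Phi A')) j"
          using cacheeq eq by simp
        also have "\<dots> = Phi A' (d (p i)) j"
          using decode[of A' "p i" j] A' pK[OF less.prems] j by simp
        finally show "Phi A (d (p i)) j = Phi A' (d (p i)) j" .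
      qed
    qed
    have memT: "\<exists>i<n. \<exists>j<B. q = (d (p i), j)" if "q \<in> T" for q
      using that unfolding T_def G_def by auto
    show "A = A'"
    proof
      show "A \<subseteq> A'"
      proof
        fix q assume q: "q \<in> A"
        then obtain i j where "i < n" "j < B" "q = (d (p i), j)" using memT A by blast
        thus "q \<in> A'" using agree q unfolding Phi_def by auto
      qed
      show "A' \<subseteq> A"
      proof
        fix q assume q: "q \<in> A'"
        then obtain i j where "i < n" "j < B" "q = (d (p i), j)" using memT A' by blast
        thus "q \<in> A" using agree q unfolding Phi_def by auto
      qed
    qed
  qed
  have img: "(\<lambda>A. psi d (Phi A)) ` Pow T \<subseteq> {xs. set xs \<subseteq> (UNIV::bool set) \<and> length xs = L}"
    using lenL by auto
  have "card (Pow T) \<le> card {xs. set xs \<subseteq> (UNIV::bool set) \<and> length xs = L}"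
    by (rule card_inj_on_le[OF injP img], rule finite_lists_length_eq) simp
  moreover have "card {xs. set xs \<subseteq> (UNIV::bool set) \<and> length xs = L} = 2 ^ L"
    using card_lists_length_eq[of "UNIV::bool set" L] by (simp add: card_UNIV_bool)
  ultimately have "(2::nat) ^ card T \<le> 2 ^ L"
    using finT by (simp add: card_Pow)
  hence "card T \<le> L" by simp
  thus ?thesis using cardT by simp
qed

definition uu :: "nat \<Rightarrow> nat \<Rightarrow> nat" where "uu K x = x mod K + 1"
definition F1 :: "nat \<Rightarrow> nat \<Rightarrow> nat \<Rightarrow> nat \<Rightarrow> nat" where "F1 a b m c = m * (a + b) + c"
definition F2 :: "nat \<Rightarrow> nat \<Rightarrow> nat \<Rightarrow> nat \<Rightarrow> nat" where "F2 a b m e = m * (a + b) + a + e"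
definition zz where "zz K B S f = card (Wsub K B S f {})"
definition yy where "yy K B S f j = card (Wsub K B S f {j})"

lemma Dset1_F1: "Dset1 a b (Suc m) = F1 a b m ` {1..a}"
proof -
  have "Dset1 a b (Suc m) = {m*(a+b)+1 .. m*(a+b)+a}" unfolding Dset1_def by (simp add: algebra_simps)
  also have "\<dots> = F1 a b m ` {1..a}"
  proof
    show "{m*(a+b)+1 .. m*(a+b)+a} \<subseteq> F1 a b m ` {1..a}"
    proof
      fix x assume x: "x \<in> {m*(a+b)+1 .. m*(a+b)+a}"
      hence "x = F1 a b m (x - m*(a+b))" "x - m*(a+b) \<in> {1..a}" unfolding F1_def by auto
      thus "x \<in> F1 a b m ` {1..a}" by blast
    qed
  qed (auto simp: F1_def)
  finally show ?thesis .
qed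

lemma Dset2_F2: "Dset2 a b (Suc m) = F2 a b m ` {1..b}"
proof -
  have "Dset2 a b (Suc m) = {m*(a+b)+a+1 .. m*(a+b)+a+b}" unfolding Dset2_def by (simp add: algebra_simps)
  also have "\<dots> = F2 a b m ` {1..b}"
  proof
    show "{m*(a+b)+a+1 .. m*(a+b)+a+b} \<subseteq> F2 a b m ` {1..b}"
    proof
      fix x assume x: "x \<in> {m*(a+b)+a+1 .. m*(a+b)+a+b}"
      hence "x = F2 a b m (x - (m*(a+b)+a))" "x - (m*(a+b)+a) \<in> {1..b}" unfolding F2_def by auto
      thus "x \<in> F2 a b m ` {1..b}" by blast
    qed
  qed (auto simp: F2_def)
  finally show ?thesis .
qed

lemma F1_inj: "c \<in> {1..a} \<Longrightarrow> c' \<in> {1..a} \<Longrightarrow> F1 a b m c = F1 a b m' c' \<Longrightarrow> m = m' \<and> c = c'"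
  unfolding F1_def using blk[of m "a+b" c m' c'] by auto

lemma F2_inj: "e \<in> {1..b} \<Longrightarrow> e' \<in> {1..b} \<Longrightarrow> F2 a b m e = F2 a b m' e' \<Longrightarrow> m = m' \<and> e = e'"
  unfolding F2_def using blk[of m "a+b" "a+e" m' "a+e'"] by (auto simp: add.assoc)

lemma F12: "c \<in> {1..a} \<Longrightarrow> e \<in> {1..b} \<Longrightarrow> F1 a b m c \<noteq> F2 a b m' e"
  unfolding F1_def F2_def using blk[of m "a+b" c m' "a+e"] by (auto simp: add.assoc)

lemma bij_u: assumes "K > 0" shows "bij_betw (\<lambda>r. uu K (m + r)) {..<K} {1..K}"
proof -
  have inj: "inj_on (\<lambda>r. uu K (m + r)) {..<K}"
    by (rule inj_onI) (auto simp: uu_def intro: modinj)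
  have sub: "(\<lambda>r. uu K (m + r)) ` {..<K} \<subseteq> {1..K}"
    using assms by (auto simp: uu_def Suc_leI)
  have "card ((\<lambda>r. uu K (m + r)) ` {..<K}) = card {1..K}" using card_image[OF inj] by simp
  hence "(\<lambda>r. uu K (m + r)) ` {..<K} = {1..K}" using card_subset_eq[OF _ sub] by simp
  thus ?thesis using inj unfolding bij_betw_def by simp
qed

lemma gcnt_ge:
  assumes "P \<subseteq> {1..K}"
  shows "zz K B S f + (\<Sum>j\<in>{1..K} - P. yy K B S f j) \<le> gcnt B S f P"
proof -
  define G where "G = {j. j < B \<and> (\<forall>k\<in>P. (f, j) \<notin> S k)}"
  define U where "U = (\<Union>j\<in>{1..K} - P. Wsub K B S f {j})"
  have finW: "finite (Wsub K B S f X)" for X unfolding Wsub_def by auto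
  have dj: "Wsub K B S f {i} \<inter> Wsub K B S f {j} = {}"
    if "i \<in> {1..K} - P" "j \<in> {1..K} - P" "i \<noteq> j" for i j
  proof -
    { fix x assume x1: "x \<in> Wsub K B S f {i}" and x2: "x \<in> Wsub K B S f {j}"
      have "i \<in> {1..K}" using that by simp
      have h1: "((f,x) \<in> S i) = (i \<in> {i})" using x1 \<open>i \<in> {1..K}\<close> unfolding Wsub_def by blast
      have h2: "((f,x) \<in> S i) = (i \<in> {j})" using x2 \<open>i \<in> {1..K}\<close> unfolding Wsub_def by blast
      have False using h1 h2 that by simp }
    thus ?thesis by blast
  qed
  have cU: "card U = (\<Sum>j\<in>{1..K} - P. yy K B S f j)"
    unfolding U_def yy_def
    by (rule card_UN_disjoint) (simp_all add: finW dj)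
  have disj: "Wsub K B S f {} \<inter> U = {}"
  proof -
    { fix x j assume x1: "x \<in> Wsub K B S f {}" and j: "j \<in> {1..K} - P" and x2: "x \<in> Wsub K B S f {j}"
      have "j \<in> {1..K}" using j by simp
      have h1: "((f,x) \<in> S j) = (j \<in> {})" using x1 \<open>j \<in> {1..K}\<close> unfolding Wsub_def by blast
      have h2: "((f,x) \<in> S j) = (j \<in> {j})" using x2 \<open>j \<in> {1..K}\<close> unfolding Wsub_def by blast
      have False using h1 h2 by simp }
    thus ?thesis unfolding U_def by blast
  qed
  have finU: "finite U" unfolding U_def using finW by auto
  have "card (Wsub K B S f {} \<union> U) = zz K B S f + card U"
    unfolding zz_def by (rule card_Un_disjoint[OF finW finU disj])
  moreover have sub: "Wsub K B S f {} \<union> U \<subseteq> G"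
  proof
    fix x assume x: "x \<in> Wsub K B S f {} \<union> U"
    show "x \<in> G"
    proof (cases "x \<in> Wsub K B S f {}")
      case True
      hence xB: "x < B" and xs: "\<forall>k\<in>{1..K}. (f, x) \<notin> S k" unfolding Wsub_def by auto
      have "\<forall>k\<in>P. (f, x) \<notin> S k" using xs assms by blast
      thus ?thesis using xB unfolding G_def by simp
    next
      case False
      then obtain j where j: "j \<in> {1..K} - P" "x \<in> Wsub K B S f {j}" using x unfolding U_def by blast
      hence xB: "x < B" and xs: "\<forall>k\<in>{1..K}. ((f, x) \<in> S k) = (k = j)" unfolding Wsub_def by auto
      have "\<forall>k\<in>P. (f, x) \<notin> S k"
      proof
        fix k assume k: "k \<in> P"
        hence "k \<in> {1..K}" "k \<noteq> j" using assms j by auto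
        thus "(f, x) \<notin> S k" using xs by blast
      qed
      thus ?thesis using xB unfolding G_def by simp
    qed
  qed
  moreover have fG: "finite G" unfolding G_def by auto
  ultimately have "zz K B S f + card U \<le> card G" using card_mono[OF fG sub] by simp
  thus ?thesis using cU unfolding gcnt_def G_def by simp
qed

lemma gcnt_ge_shift:
  assumes "K > 0" "R \<subseteq> {..<K}"
  shows "zz K B S f + (\<Sum>r\<in>{..<K} - R. yy K B S f (uu K (m + r)))
         \<le> gcnt B S f ((\<lambda>r. uu K (m + r)) ` R)"
proof -
  have bij: "bij_betw (\<lambda>r. uu K (m + r)) {..<K} {1..K}" by (rule bij_u[OF assms(1)])
  hence inj: "inj_on (\<lambda>r. uu K (m + r)) {..<K}" and im: "(\<lambda>r. uu K (m + r)) ` {..<K} = {1..K}"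
    unfolding bij_betw_def by auto
  have "(\<lambda>r. uu K (m + r)) ` ({..<K} - R) = (\<lambda>r. uu K (m + r)) ` {..<K} - (\<lambda>r. uu K (m + r)) ` R"
    using assms(2) by (intro inj_on_image_set_diff[OF inj]) auto
  hence diff: "{1..K} - (\<lambda>r. uu K (m + r)) ` R = (\<lambda>r. uu K (m + r)) ` ({..<K} - R)"
    unfolding im by (rule sym)
  have inj2: "inj_on (\<lambda>r. uu K (m + r)) ({..<K} - R)"
    by (rule inj_on_subset[OF inj]) (rule Diff_subset)
  have eq: "(\<Sum>j\<in>{1..K} - (\<lambda>r. uu K (m + r)) ` R. yy K B S f j)
        = (\<Sum>r\<in>{..<K} - R. yy K B S f (uu K (m + r)))"
    unfolding diff sum.reindex[OF inj2] comp_def by (rule refl)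
  have "(\<lambda>r. uu K (m + r)) ` R \<subseteq> {1..K}" using image_mono[OF assms(2), of "\<lambda>r. uu K (m + r)"] im by simp
  from gcnt_ge[OF this, of B S f] show ?thesis using eq by linarith
qed

lemma reindex_mod: fixes K t :: nat assumes "K > 0" shows "(\<Sum>s<K. h ((s + t) mod K)) = (\<Sum>m<K. (h m :: nat))"
proof -
  have inj: "inj_on (\<lambda>s. (s + t) mod K) {..<K}"
  proof (rule inj_onI)
    fix x y :: nat assume "x \<in> {..<K}" "y \<in> {..<K}" "(x + t) mod K = (y + t) mod K"
    thus "x = y" using modinj[where i=x and i'=y and x=t and K=K] by (simp add: add.commute)
  qed
  have "(\<lambda>s. (s + t) mod K) ` {..<K} \<subseteq> {..<K}" using assms by auto
  from endo_inj_surj[OF _ this inj] have "(\<lambda>s. (s + t) mod K) ` {..<K} = {..<K}" by simp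
  thus ?thesis using sum.reindex[OF inj, of h] by simp
qed

lemma chain_gen:
  fixes p d m R and m2 c e :: nat
  assumes sch: "uncoded_scheme K a b B M L S psi dec" and K: "K \<ge> 2"
    and vd: "valid_demand K a b d"
    and pK: "\<And>i. i < K \<Longrightarrow> p i \<in> {1..K}"
    and inj: "inj_on (\<lambda>i. d (p i)) {..<K}"
    and d1: "\<And>i. i < K - 1 \<Longrightarrow> d (p i) = F1 a b (m i) c"
    and d2: "d (p (K - 1)) = F2 a b m2 e"
    and pre: "\<And>i. i < K - 1 \<Longrightarrow> p ` {..i} = (\<lambda>r. uu K (m i + r)) ` R i"
    and Rs: "\<And>i. i < K - 1 \<Longrightarrow> R i \<subseteq> {..<K}"
  shows "(\<Sum>i<K - 1. zz K B S (F1 a b (m i) c)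
            + (\<Sum>r\<in>{..<K} - R i. yy K B S (F1 a b (m i) c) (uu K (m i + r))))
         + zz K B S (F2 a b m2 e) \<le> L"
proof -
  have cb: "(\<Sum>i<K. gcnt B S (d (p i)) (p ` {..i})) \<le> L"
    by (rule chain_bound[OF sch vd pK inj])
  have KS: "K = Suc (K - 1)" using K by simp
  have split: "(\<Sum>i<K. gcnt B S (d (p i)) (p ` {..i}))
      = (\<Sum>i<K - 1. gcnt B S (d (p i)) (p ` {..i})) + gcnt B S (d (p (K - 1))) (p ` {..K - 1})"
    by (subst KS, subst sum.lessThan_Suc) simp
  have t1: "zz K B S (F1 a b (m i) c)
            + (\<Sum>r\<in>{..<K} - R i. yy K B S (F1 a b (m i) c) (uu K (m i + r)))
          \<le> gcnt B S (d (p i)) (p ` {..i})" if "i < K - 1" for i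
    using gcnt_ge_shift[of K "R i" B S "F1 a b (m i) c" "m i"] K Rs[OF that]
    unfolding d1[OF that] pre[OF that] by simp
  have "p ` {..K - 1} \<subseteq> {1..K}" using pK K by auto
  from gcnt_ge[OF this, of B S "F2 a b m2 e"]
  have t2: "zz K B S (F2 a b m2 e) \<le> gcnt B S (d (p (K - 1))) (p ` {..K - 1})"
    unfolding d2 by linarith
  have "(\<Sum>i<K - 1. zz K B S (F1 a b (m i) c)
            + (\<Sum>r\<in>{..<K} - R i. yy K B S (F1 a b (m i) c) (uu K (m i + r))))
        \<le> (\<Sum>i<K - 1. gcnt B S (d (p i)) (p ` {..i}))"
    by (rule sum_mono) (use t1 in simp)
  thus ?thesis using t2 cb split by linarith
qed

lemma uu_range: "K > 0 \<Longrightarrow> uu K x \<in> {1..K}" by (simp add: uu_def Suc_leI)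

lemma dec_chain:
  fixes s c e :: nat
  assumes sch: "uncoded_scheme K a b B M L S psi dec" and K: "K \<ge> 2"
    and s: "s < K" and c: "c \<in> {1..a}" and e: "e \<in> {1..b}"
  shows "(\<Sum>i<K - 1. zz K B S (F1 a b ((s + (K - i)) mod K) c)
            + (\<Sum>r\<in>{..<K} - {..i}. yy K B S (F1 a b ((s + (K - i)) mod K) c) (uu K ((s + (K - i)) mod K + r))))
         + zz K B S (F2 a b ((s + 1) mod K) e) \<le> L"
proof -
  define p where "p i = uu K (s + (K - i))" for i
  define d where "d u = (if u = uu K (s + 1) then F2 a b (u - 1) e else F1 a b (u - 1) c)" for u
  define m where "m i = (s + (K - i)) mod K" for i
  have K0: "K > 0" using K by simp
  have vd: "valid_demand K a b d"
    unfolding valid_demand_def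
  proof
    fix u assume u: "u \<in> {1..K}"
    then obtain u' where u': "u = Suc u'" by (cases u) auto
    have "d u = F2 a b u' e \<or> d u = F1 a b u' c" unfolding d_def u' by (cases "Suc u' = uu K (s + 1)") (metis diff_Suc_1, simp)
    thus "d u \<in> Dset K a b u"
      using c e unfolding Dset_def u' by (auto simp: Dset1_F1 Dset2_F2)
  qed
  have pK: "p i \<in> {1..K}" for i unfolding p_def using uu_range[OF K0] .
  have neq: "p i \<noteq> uu K (s + 1)" if "i < K - 1" for i
  proof
    assume "p i = uu K (s + 1)"
    moreover have "s + (K - i) = (s + 1) + (K - 1 - i)" using that by simp
    ultimately have "((s + 1) + (K - 1 - i)) mod K = ((s + 1) + 0) mod K"
      unfolding p_def uu_def by simp
    from modinj[OF _ _ this] that K0 show False by simp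
  qed
  have pl: "p (K - 1) = uu K (s + 1)" unfolding p_def using K by simp
  have pm: "p i - 1 = m i" for i unfolding p_def m_def uu_def by simp
  have d1: "d (p i) = F1 a b (m i) c" if "i < K - 1" for i
    using neq[OF that] pm unfolding d_def by simp
  have d2: "d (p (K - 1)) = F2 a b ((s + 1) mod K) e"
    unfolding d_def pl by (simp add: uu_def)
  have minj: "i = j" if "i < K - 1" "j < K - 1" "m i = m j" for i j
  proof -
    have "s + (K - i) = (s + 1) + (K - 1 - i)" "s + (K - j) = (s + 1) + (K - 1 - j)" using that by simp_all
    hence "((s + 1) + (K - 1 - i)) mod K = ((s + 1) + (K - 1 - j)) mod K"
      using that(3) unfolding m_def by simp
    from modinj[OF _ _ this] that show ?thesis by simp
  qed
  have inj: "inj_on (\<lambda>i. d (p i)) {..<K}"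
  proof (rule inj_onI)
    fix i j assume i: "i \<in> {..<K}" and j: "j \<in> {..<K}" and eq: "d (p i) = d (p j)"
    show "i = j"
    proof (cases "i < K - 1")
      case ti: True
      show ?thesis
      proof (cases "j < K - 1")
        case True
        thus ?thesis using eq d1 ti minj F1_inj[OF c c] by metis
      next
        case False
        hence "j = K - 1" using j by simp
        thus ?thesis using eq d1[OF ti] d2 F12[OF c e] by simp
      qed
    next
      case fi: False
      hence ii: "i = K - 1" using i by simp
      show ?thesis
      proof (cases "j < K - 1")
        case True
        thus ?thesis using eq d1[OF True] d2 F12[OF c e] ii by simp
      next
        case False
        thus ?thesis using j ii by simp
      qed
    qed
  qed
  have pre: "p ` {..i} = (\<lambda>r. uu K (m i + r)) ` {..i}" if "i < K - 1" for i
  proof -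
    have key: "p i' = uu K (m i + (i - i'))" if "i' \<le> i" for i'
    proof -
      have "s + (K - i) + (i - i') = s + (K - i')" using that \<open>i < K - 1\<close> by simp
      thus ?thesis unfolding p_def m_def uu_def by (metis mod_add_left_eq)
    qed
    show ?thesis
    proof
      show "p ` {..i} \<subseteq> (\<lambda>r. uu K (m i + r)) ` {..i}"
      proof
        fix x assume "x \<in> p ` {..i}"
        then obtain i' where i': "i' \<le> i" "x = p i'" by auto
        hence "x = uu K (m i + (i - i'))" "i - i' \<in> {..i}" using key by auto
        thus "x \<in> (\<lambda>r. uu K (m i + r)) ` {..i}" by blast
      qed
      show "(\<lambda>r. uu K (m i + r)) ` {..i} \<subseteq> p ` {..i}"
      proof
        fix x assume "x \<in> (\<lambda>r. uu K (m i + r)) ` {..i}"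
        then obtain r where r: "r \<le> i" "x = uu K (m i + r)" by auto
        have "x = p (i - r)" using key[of "i - r"] r by simp
        thus "x \<in> p ` {..i}" by simp
      qed
    qed
  qed
  have Rs: "{..i} \<subseteq> {..<K}" if "i < K - 1" for i using that by auto
  show ?thesis
    using chain_gen[OF sch K vd _ inj d1 d2 pre Rs] pK unfolding m_def by blast
qed

lemma inc_chain:
  fixes s c e :: nat
  assumes sch: "uncoded_scheme K a b B M L S psi dec" and K: "K \<ge> 2"
    and s: "s < K" and c: "c \<in> {1..a}" and e: "e \<in> {1..b}"
  shows "(\<Sum>i<K - 1. zz K B S (F1 a b ((s + (i + 1)) mod K) c)
            + (\<Sum>r\<in>{..<K} - {K - 1 - i..<K}. yy K B S (F1 a b ((s + (i + 1)) mod K) c) (uu K ((s + (i + 1)) mod K + r))))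
         + zz K B S (F2 a b ((s + (K - 1)) mod K) e) \<le> L"
proof -
  define p where "p i = uu K (s + i)" for i
  define d where "d u = (if u = uu K (s + (K - 1)) then F2 a b (u - 1) e else F1 a b (u mod K) c)" for u
  define m where "m i = (s + (i + 1)) mod K" for i
  have K0: "K > 0" using K by simp
  have vd: "valid_demand K a b d"
    unfolding valid_demand_def
  proof
    fix u assume u: "u \<in> {1..K}"
    then obtain u' where u': "u = Suc u'" by (cases u) auto
    have cy: "cyc (u + 1) K = Suc (u mod K)" unfolding cyc_def by simp
    have "d u = F2 a b u' e \<or> d u = F1 a b (u mod K) c"
      unfolding d_def u' by (cases "Suc u' = uu K (s + (K - 1))") (metis diff_Suc_1, simp)
    thus "d u \<in> Dset K a b u"
      using c e unfolding Dset_def Dset3_def cy unfolding u' by (auto simp: Dset1_F1 Dset2_F2)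
  qed
  have pK: "p i \<in> {1..K}" for i unfolding p_def using uu_range[OF K0] .
  have neq: "p i \<noteq> uu K (s + (K - 1))" if "i < K - 1" for i
  proof
    assume "p i = uu K (s + (K - 1))"
    hence "(s + i) mod K = (s + (K - 1)) mod K" unfolding p_def uu_def by simp
    from modinj[OF _ _ this] that K0 show False by simp
  qed
  have pm: "p i mod K = m i" for i unfolding p_def m_def uu_def by (simp add: mod_Suc_eq)
  have d1: "d (p i) = F1 a b (m i) c" if "i < K - 1" for i
    using neq[OF that] pm unfolding d_def by simp
  have d2: "d (p (K - 1)) = F2 a b ((s + (K - 1)) mod K) e"
    unfolding d_def p_def by (simp add: uu_def)
  have minj: "i = j" if "i < K - 1" "j < K - 1" "m i = m j" for i j
  proof -
    have "((s + 1) + i) mod K = ((s + 1) + j) mod K"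
      using that(3) unfolding m_def by (simp add: add.commute add.left_commute)
    from modinj[OF _ _ this] that show ?thesis by simp
  qed
  have inj: "inj_on (\<lambda>i. d (p i)) {..<K}"
  proof (rule inj_onI)
    fix i j assume i: "i \<in> {..<K}" and j: "j \<in> {..<K}" and eq: "d (p i) = d (p j)"
    show "i = j"
    proof (cases "i < K - 1")
      case ti: True
      show ?thesis
      proof (cases "j < K - 1")
        case True
        thus ?thesis using eq d1 ti minj F1_inj[OF c c] by metis
      next
        case False
        hence "j = K - 1" using j by simp
        thus ?thesis using eq d1[OF ti] d2 F12[OF c e] by simp
      qed
    next
      case fi: False
      hence ii: "i = K - 1" using i by simp
      show ?thesis
      proof (cases "j < K - 1")
        case True
        thus ?thesis using eq d1[OF True] d2 F12[OF c e] ii by simp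
      next
        case False
        thus ?thesis using j ii by simp
      qed
    qed
  qed
  have pre: "p ` {..i} = (\<lambda>r. uu K (m i + r)) ` {K - 1 - i..<K}" if "i < K - 1" for i
  proof -
    have key: "p i' = uu K (m i + (K - 1 - i + i'))" if "i' \<le> i" for i'
    proof -
      have "s + (i + 1) + (K - 1 - i + i') = (s + i') + K" using that \<open>i < K - 1\<close> by simp
      hence "(m i + (K - 1 - i + i')) mod K = (s + i') mod K"
        unfolding m_def by (metis mod_add_left_eq mod_add_self2)
      thus ?thesis unfolding p_def uu_def by simp
    qed
    show ?thesis
    proof
      show "p ` {..i} \<subseteq> (\<lambda>r. uu K (m i + r)) ` {K - 1 - i..<K}"
      proof
        fix x assume "x \<in> p ` {..i}"
        then obtain i' where i': "i' \<le> i" "x = p i'" by auto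
        hence "x = uu K (m i + (K - 1 - i + i'))" "K - 1 - i + i' \<in> {K - 1 - i..<K}"
          using key \<open>i < K - 1\<close> by auto
        thus "x \<in> (\<lambda>r. uu K (m i + r)) ` {K - 1 - i..<K}" by blast
      qed
      show "(\<lambda>r. uu K (m i + r)) ` {K - 1 - i..<K} \<subseteq> p ` {..i}"
      proof
        fix x assume "x \<in> (\<lambda>r. uu K (m i + r)) ` {K - 1 - i..<K}"
        then obtain r where r: "K - 1 - i \<le> r" "r < K" "x = uu K (m i + r)" by auto
        have r2: "K - 1 - i + (r - (K - 1 - i)) = r" "r - (K - 1 - i) \<le> i" using r \<open>i < K - 1\<close> by auto
        have "x = p (r - (K - 1 - i))" using key[OF r2(2)] r r2(1) by simp
        thus "x \<in> p ` {..i}" using r2(2) by simp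
      qed
    qed
  qed
  have Rs: "{K - 1 - i..<K} \<subseteq> {..<K}" if "i < K - 1" for i by auto
  show ?thesis
    using chain_gen[OF sch K vd _ inj d1 d2 pre Rs] pK unfolding m_def by blast
qed

lemma sum_shift_full:
  assumes "K > 0"
  shows "(\<Sum>r<K. yy K B S f (uu K (m + r))) = (\<Sum>j\<in>{1..K}. yy K B S f j)"
  using sum.reindex_bij_betw[OF bij_u[OF assms, of m], of "yy K B S f"] by simp

lemma comb:
  fixes c e :: nat
  assumes sch: "uncoded_scheme K a b B M L S psi dec" and K: "K \<ge> 2"
    and c: "c \<in> {1..a}" and e: "e \<in> {1..b}"
  shows "(\<Sum>m<K. (K - 1) * (2 * zz K B S (F1 a b m c) + (\<Sum>j\<in>{1..K}. yy K B S (F1 a b m c) j))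
                + 2 * zz K B S (F2 a b m e)) \<le> 2 * K * L"
proof -
  have K0: "K > 0" using K by simp
  define Df where "Df i m = zz K B S (F1 a b m c)
            + (\<Sum>r\<in>{..<K} - {..i}. yy K B S (F1 a b m c) (uu K (m + r)))" for i m
  define Ig where "Ig i m = zz K B S (F1 a b m c)
            + (\<Sum>r\<in>{..<K} - {K - 1 - i..<K}. yy K B S (F1 a b m c) (uu K (m + r)))" for i m
  define Z where "Z m = zz K B S (F2 a b m e)" for m
  have dec: "(\<Sum>i<K - 1. Df i ((s + (K - i)) mod K)) + Z ((s + 1) mod K) \<le> L" if "s < K" for s
    using dec_chain[OF sch K that c e] unfolding Df_def Z_def .
  have inc: "(\<Sum>i<K - 1. Ig i ((s + (i + 1)) mod K)) + Z ((s + (K - 1)) mod K) \<le> L" if "s < K" for s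
    using inc_chain[OF sch K that c e] unfolding Ig_def Z_def .
  have "(\<Sum>s<K. (\<Sum>i<K - 1. Df i ((s + (K - i)) mod K)) + Z ((s + 1) mod K)) \<le> (\<Sum>s<K. L)"
    by (rule sum_mono) (use dec in simp)
  also have "(\<Sum>s<K. (\<Sum>i<K - 1. Df i ((s + (K - i)) mod K)) + Z ((s + 1) mod K))
      = (\<Sum>i<K - 1. \<Sum>m<K. Df i m) + (\<Sum>m<K. Z m)"
  proof -
    have "(\<Sum>s<K. \<Sum>i<K - 1. Df i ((s + (K - i)) mod K)) = (\<Sum>i<K - 1. \<Sum>s<K. Df i ((s + (K - i)) mod K))"
      by (rule sum.swap)
    also have "\<dots> = (\<Sum>i<K - 1. \<Sum>m<K. Df i m)"
      by (rule sum.cong[OF refl], rule reindex_mod[OF K0])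
    finally show ?thesis using reindex_mod[OF K0, of Z 1] by (simp only: sum.distrib)
  qed
  finally have S1: "(\<Sum>i<K - 1. \<Sum>m<K. Df i m) + (\<Sum>m<K. Z m) \<le> K * L" by simp
  have "(\<Sum>s<K. (\<Sum>i<K - 1. Ig i ((s + (i + 1)) mod K)) + Z ((s + (K - 1)) mod K)) \<le> (\<Sum>s<K. L)"
    by (rule sum_mono) (use inc in simp)
  also have "(\<Sum>s<K. (\<Sum>i<K - 1. Ig i ((s + (i + 1)) mod K)) + Z ((s + (K - 1)) mod K))
      = (\<Sum>i<K - 1. \<Sum>m<K. Ig i m) + (\<Sum>m<K. Z m)"
  proof -
    have "(\<Sum>s<K. \<Sum>i<K - 1. Ig i ((s + (i + 1)) mod K)) = (\<Sum>i<K - 1. \<Sum>s<K. Ig i ((s + (i + 1)) mod K))"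
      by (rule sum.swap)
    also have "\<dots> = (\<Sum>i<K - 1. \<Sum>m<K. Ig i m)"
      by (rule sum.cong[OF refl], rule reindex_mod[OF K0])
    finally show ?thesis using reindex_mod[OF K0, of Z "K - 1"] by (simp only: sum.distrib)
  qed
  finally have S2: "(\<Sum>i<K - 1. \<Sum>m<K. Ig i m) + (\<Sum>m<K. Z m) \<le> K * L" by simp
  have rev: "(\<Sum>i<K - 1. Ig i m) = (\<Sum>i<K - 1. Ig (K - 1 - Suc i) m)" for m
    by (rule sum.nat_diff_reindex[symmetric])
  have pair: "Df i m + Ig (K - 1 - Suc i) m
      = 2 * zz K B S (F1 a b m c) + (\<Sum>j\<in>{1..K}. yy K B S (F1 a b m c) j)" if "i < K - 1" for i m
  proof -
    have st: "{..<K} - {K - 1 - (K - 1 - Suc i)..<K} = {..i}" using that by auto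
    have sub: "{..i} \<subseteq> {..<K}" using that by auto
    have "(\<Sum>r<K. yy K B S (F1 a b m c) (uu K (m + r)))
        = (\<Sum>r\<in>{..<K} - {..i}. yy K B S (F1 a b m c) (uu K (m + r)))
          + (\<Sum>r\<in>{..i}. yy K B S (F1 a b m c) (uu K (m + r)))"
      by (rule sum.subset_diff[OF sub]) simp
    thus ?thesis unfolding Df_def Ig_def st sum_shift_full[OF K0] by simp
  qed
  have "(\<Sum>i<K - 1. \<Sum>m<K. Df i m) + (\<Sum>i<K - 1. \<Sum>m<K. Ig i m)
      = (\<Sum>m<K. \<Sum>i<K - 1. Df i m + Ig (K - 1 - Suc i) m)"
  proof -
    have A: "(\<Sum>i<K - 1. \<Sum>m<K. Df i m) = (\<Sum>m<K. \<Sum>i<K - 1. Df i m)" by (rule sum.swap)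
    have "(\<Sum>i<K - 1. \<Sum>m<K. Ig i m) = (\<Sum>m<K. \<Sum>i<K - 1. Ig i m)" by (rule sum.swap)
    also have "\<dots> = (\<Sum>m<K. \<Sum>i<K - 1. Ig (K - 1 - Suc i) m)" by (rule sum.cong[OF refl], rule rev)
    finally show ?thesis using A by (simp only: sum.distrib)
  qed
  also have "\<dots> = (\<Sum>m<K. (K - 1) * (2 * zz K B S (F1 a b m c) + (\<Sum>j\<in>{1..K}. yy K B S (F1 a b m c) j)))"
  proof (rule sum.cong[OF refl])
    fix m
    have "(\<Sum>i<K - 1. Df i m + Ig (K - 1 - Suc i) m)
        = (\<Sum>i<K - 1. 2 * zz K B S (F1 a b m c) + (\<Sum>j\<in>{1..K}. yy K B S (F1 a b m c) j))"
      by (rule sum.cong[OF refl], rule pair, simp)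
    thus "(\<Sum>i<K - 1. Df i m + Ig (K - 1 - Suc i) m)
        = (K - 1) * (2 * zz K B S (F1 a b m c) + (\<Sum>j\<in>{1..K}. yy K B S (F1 a b m c) j))" by simp
  qed
  finally have S3: "(\<Sum>i<K - 1. \<Sum>m<K. Df i m) + (\<Sum>i<K - 1. \<Sum>m<K. Ig i m)
      = (\<Sum>m<K. (K - 1) * (2 * zz K B S (F1 a b m c) + (\<Sum>j\<in>{1..K}. yy K B S (F1 a b m c) j)))" .
  have "(\<Sum>m<K. (K - 1) * (2 * zz K B S (F1 a b m c) + (\<Sum>j\<in>{1..K}. yy K B S (F1 a b m c) j))
                + 2 * zz K B S (F2 a b m e))
      = (\<Sum>m<K. (K - 1) * (2 * zz K B S (F1 a b m c) + (\<Sum>j\<in>{1..K}. yy K B S (F1 a b m c) j)))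
        + 2 * (\<Sum>m<K. Z m)"
    unfolding Z_def by (simp add: sum.distrib sum_distrib_left)
  thus ?thesis using S1 S2 S3 by simp
qed

lemma C1_eq: "C1 K a b = (\<lambda>(m, c). F1 a b m c) ` ({..<K} \<times> {1..a})"
proof
  show "C1 K a b \<subseteq> (\<lambda>(m, c). F1 a b m c) ` ({..<K} \<times> {1..a})"
  proof
    fix x assume "x \<in> C1 K a b"
    then obtain k where k: "k \<in> {1..K}" "x \<in> Dset1 a b k" unfolding C1_def by auto
    then obtain m where m: "k = Suc m" by (cases k) auto
    then obtain c where "c \<in> {1..a}" "x = F1 a b m c" using k Dset1_F1 by auto
    thus "x \<in> (\<lambda>(m, c). F1 a b m c) ` ({..<K} \<times> {1..a})" using k m by force
  qed
  show "(\<lambda>(m, c). F1 a b m c) ` ({..<K} \<times> {1..a}) \<subseteq> C1 K a b"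
  proof
    fix x assume "x \<in> (\<lambda>(m, c). F1 a b m c) ` ({..<K} \<times> {1..a})"
    then obtain m c where mc: "m < K" "c \<in> {1..a}" "x = F1 a b m c" by auto
    hence "x \<in> Dset1 a b (Suc m)" using Dset1_F1 by auto
    thus "x \<in> C1 K a b" unfolding C1_def using mc by auto
  qed
qed

lemma C2_eq: "C2 K a b = (\<lambda>(m, e). F2 a b m e) ` ({..<K} \<times> {1..b})"
proof
  show "C2 K a b \<subseteq> (\<lambda>(m, e). F2 a b m e) ` ({..<K} \<times> {1..b})"
  proof
    fix x assume "x \<in> C2 K a b"
    then obtain k where k: "k \<in> {1..K}" "x \<in> Dset2 a b k" unfolding C2_def by auto
    then obtain m where m: "k = Suc m" by (cases k) auto
    then obtain e where "e \<in> {1..b}" "x = F2 a b m e" using k Dset2_F2 by auto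
    thus "x \<in> (\<lambda>(m, e). F2 a b m e) ` ({..<K} \<times> {1..b})" using k m by force
  qed
  show "(\<lambda>(m, e). F2 a b m e) ` ({..<K} \<times> {1..b}) \<subseteq> C2 K a b"
  proof
    fix x assume "x \<in> (\<lambda>(m, e). F2 a b m e) ` ({..<K} \<times> {1..b})"
    then obtain m e where mc: "m < K" "e \<in> {1..b}" "x = F2 a b m e" by auto
    hence "x \<in> Dset2 a b (Suc m)" using Dset2_F2 by auto
    thus "x \<in> C2 K a b" unfolding C2_def using mc by auto
  qed
qed

lemma sumC1: "(\<Sum>i\<in>C1 K a b. g i) = (\<Sum>m<K. \<Sum>c\<in>{1..a}. (g (F1 a b m c) :: real))"
proof -
  have inj: "inj_on (\<lambda>(m, c). F1 a b m c) ({..<K} \<times> {1..a})"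
  proof (rule inj_onI)
    fix p q :: "nat \<times> nat"
    assume p: "p \<in> {..<K} \<times> {1..a}" and q: "q \<in> {..<K} \<times> {1..a}"
      and eq: "(\<lambda>(m, c). F1 a b m c) p = (\<lambda>(m, c). F1 a b m c) q"
    obtain m c where pm: "p = (m, c)" by (cases p)
    obtain m' c' where qm: "q = (m', c')" by (cases q)
    have "c \<in> {1..a}" "c' \<in> {1..a}" "F1 a b m c = F1 a b m' c'" using p q eq unfolding pm qm by auto
    from F1_inj[OF this] show "p = q" unfolding pm qm by simp
  qed
  show ?thesis unfolding C1_eq sum.reindex[OF inj] sum.cartesian_product comp_def
    by (rule sum.cong) (auto split: prod.splits)
qed

lemma sumC2: "(\<Sum>i\<in>C2 K a b. g i) = (\<Sum>m<K. \<Sum>e\<in>{1..b}. (g (F2 a b m e) :: real))"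
proof -
  have inj: "inj_on (\<lambda>(m, e). F2 a b m e) ({..<K} \<times> {1..b})"
  proof (rule inj_onI)
    fix p q :: "nat \<times> nat"
    assume p: "p \<in> {..<K} \<times> {1..b}" and q: "q \<in> {..<K} \<times> {1..b}"
      and eq: "(\<lambda>(m, c). F2 a b m c) p = (\<lambda>(m, c). F2 a b m c) q"
    obtain m c where pm: "p = (m, c)" by (cases p)
    obtain m' c' where qm: "q = (m', c')" by (cases q)
    have "c \<in> {1..b}" "c' \<in> {1..b}" "F2 a b m c = F2 a b m' c'" using p q eq unfolding pm qm by auto
    from F2_inj[OF this] show "p = q" unfolding pm qm by simp
  qed
  show ?thesis unfolding C2_eq sum.reindex[OF inj] sum.cartesian_product comp_def
    by (rule sum.cong) (auto split: prod.splits)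
qed

theorem mainTheorem6:
  fixes K a b B L :: nat and M :: real
    and S :: "nat \<Rightarrow> (nat \<times> nat) set"
    and psi :: "(nat \<Rightarrow> nat) \<Rightarrow> (nat \<Rightarrow> nat \<Rightarrow> bool) \<Rightarrow> bool list"
    and dec :: "nat \<Rightarrow> (nat \<Rightarrow> nat) \<Rightarrow> ((nat \<times> nat) \<Rightarrow> bool) \<Rightarrow> bool list \<Rightarrow> nat \<Rightarrow> bool"
  assumes "K \<ge> 2" and "a \<ge> 1" and "b \<ge> 1" and "B \<ge> 1"
    and "uncoded_scheme K a b B M L S psi dec"
  shows "real L / real B \<ge>
           real (K - 1) / real (a * K) * alpha0 K a b B S
         + 1 / real (b * K) * beta0 K a b B S
         + real (K - 1) / real (2 * a * K) * alpha1 K a b B S"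
proof -
  note K = assms(1) and sch = assms(5)
  define z1 where "z1 m c = real (zz K B S (F1 a b m c))" for m c
  define y1 where "y1 m c = (\<Sum>j\<in>{1..K}. real (yy K B S (F1 a b m c) j))" for m c
  define z2 where "z2 m e = real (zz K B S (F2 a b m e))" for m e
  define A0 where "A0 = (\<Sum>m<K. \<Sum>c\<in>{1..a}. z1 m c)"
  define A1 where "A1 = (\<Sum>m<K. \<Sum>c\<in>{1..a}. y1 m c)"
  define B0 where "B0 = (\<Sum>m<K. \<Sum>e\<in>{1..b}. z2 m e)"
  define k1 where "k1 = real (K - 1)"
  have al0: "alpha0 K a b B S = A0 / real B"
    unfolding alpha0_def A0_def z1_def zz_def by (simp only: sumC1)
  have al1: "alpha1 K a b B S = A1 / real B"
    unfolding alpha1_def A1_def y1_def yy_def by (simp only: sumC1)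
  have be0: "beta0 K a b B S = B0 / real B"
    unfolding beta0_def B0_def z2_def zz_def by (simp only: sumC2)
  define P where "P m c = k1 * (2 * z1 m c + y1 m c)" for m c
  define Q where "Q m e = 2 * z2 m e" for m e
  have combr: "(\<Sum>m<K. P m c + Q m e) \<le> 2 * real K * real L" if c: "c \<in> {1..a}" and e: "e \<in> {1..b}" for c e
  proof -
    have "real (\<Sum>m<K. (K - 1) * (2 * zz K B S (F1 a b m c) + (\<Sum>j\<in>{1..K}. yy K B S (F1 a b m c) j))
                + 2 * zz K B S (F2 a b m e)) \<le> real (2 * K * L)"
      using comb[OF sch K c e] by (simp only: of_nat_le_iff)
    thus ?thesis unfolding P_def Q_def k1_def z1_def y1_def z2_def by simp
  qed
  have "(\<Sum>c\<in>{1..a}. \<Sum>e\<in>{1..b}. \<Sum>m<K. P m c + Q m e) \<le> (\<Sum>c\<in>{1..a}. \<Sum>e\<in>{1..b}. 2 * real K * real L)"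
    by (intro sum_mono combr) auto
  also have "\<dots> = real a * real b * (2 * real K * real L)" by simp
  also have "(\<Sum>c\<in>{1..a}. \<Sum>e\<in>{1..b}. \<Sum>m<K. P m c + Q m e)
      = real b * (\<Sum>c\<in>{1..a}. \<Sum>m<K. P m c) + real a * (\<Sum>e\<in>{1..b}. \<Sum>m<K. Q m e)"
    by (simp add: sum.distrib sum_distrib_left)
  finally have H0: "real b * (\<Sum>c\<in>{1..a}. \<Sum>m<K. P m c) + real a * (\<Sum>e\<in>{1..b}. \<Sum>m<K. Q m e)
      \<le> real a * real b * (2 * real K * real L)" .
  have e1: "(\<Sum>c\<in>{1..a}. \<Sum>m<K. P m c) = k1 * (2 * A0 + A1)"
  proof -
    have "(\<Sum>c\<in>{1..a}. \<Sum>m<K. P m c) = (\<Sum>m<K. \<Sum>c\<in>{1..a}. P m c)" by (rule sum.swap)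
    also have "\<dots> = k1 * (\<Sum>m<K. \<Sum>c\<in>{1..a}. 2 * z1 m c + y1 m c)"
      unfolding P_def by (simp add: sum_distrib_left)
    also have "\<dots> = k1 * (2 * A0 + A1)"
      unfolding A0_def A1_def by (simp add: sum.distrib sum_distrib_left)
    finally show ?thesis .
  qed
  have e2: "(\<Sum>e\<in>{1..b}. \<Sum>m<K. Q m e) = 2 * B0"
    unfolding Q_def B0_def
    by (subst sum.swap) (simp add: sum_distrib_left)
  have H: "real b * (k1 * (2 * A0 + A1)) + real a * (2 * B0) \<le> real a * real b * (2 * real K * real L)"
    using H0 unfolding e1 e2 .
  have pos: "real a > 0" "real b > 0" "real K > 0" "real B > 0" using assms by auto
  have "real (K - 1) / real (a * K) * alpha0 K a b B S
         + 1 / real (b * K) * beta0 K a b B S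
         + real (K - 1) / real (2 * a * K) * alpha1 K a b B S
       = (real b * (k1 * (2 * A0 + A1)) + real a * (2 * B0)) / (real a * real b * (2 * real K) * real B)"
    unfolding al0 al1 be0 k1_def using pos by (simp add: field_simps)
  also have "\<dots> \<le> (real a * real b * (2 * real K * real L)) / (real a * real b * (2 * real K) * real B)"
    by (rule divide_right_mono[OF H]) (use pos in simp)
  also have "\<dots> = real L / real B" using pos by (simp add: field_simps)
  finally show ?thesis .
qed

end
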